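(* Let $E:\mathbb{R}^{N_x}\to\mathbb{R}$ be twice differentiable, and consider the optimal control problem (R): minimize $y(t_f)$ over state trajectories $(y(\cdot),\boldsymbol x(\cdot),\boldsymbol v(\cdot))$ with $y(t)\in\mathbb{R}$, $\boldsymbol x(t),\boldsymbol v(t)\in\mathbb{R}^{N_x}$, unconstrained controls $\boldsymbol u(t)\in\mathbb{R}^{N_x}$ and free final time $t_f$, subject to $\dot{\boldsymbol x}=\boldsymbol v$, $\dot{\boldsymbol v}=\boldsymbol u$, $\dot y=\nabla E(\boldsymbol x)\cdot\boldsymbol v$, $(\boldsymbol x(t_0),t_0)=(\boldsymbol x^0,t^0)$, $y(t_0)=E(\boldsymbol x^0)$, $\boldsymbol v(t_f)=\mathbf 0$, where $\boldsymbol x^0\in\mathbb{R}^{N_x}$ and $t^0$ are given, and $t_f$, $\boldsymbol x(t_f)$, $\boldsymbol v(t_0)$ are free. Then Problem (R) has no abnormal extremals; that is, for every extremal the cost multiplier $\nu_0$ is strictly positive.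
   Context: The Pontryagin Hamiltonian of (R) is $H(\boldsymbol\lambda_x,\boldsymbol\lambda_v,\lambda_y,\boldsymbol x,\boldsymbol v,y,\boldsymbol u)=\boldsymbol\lambda_x\cdot\boldsymbol v+\boldsymbol\lambda_v\cdot\boldsymbol u+\lambda_y\,\nabla E(\boldsymbol x)\cdot\boldsymbol v$. An extremal is a state–control trajectory together with costates $(\boldsymbol\lambda_x,\boldsymbol\lambda_v,\lambda_y)$ and a cost multiplier $\nu_0\ge 0$, not all multipliers vanishing (nontriviality), satisfying the adjoint equations $\dot{\boldsymbol\lambda}_x=-\lambda_y\nabla^2E(\boldsymbol x)\boldsymbol v$, $\dot{\boldsymbol\lambda}_v=-\boldsymbol\lambda_x-\lambda_y\nabla E(\boldsymbol x)$, $\dot\lambda_y=0$; the transversality conditions $\boldsymbol\lambda_x(t_f)=\mathbf 0$, $\boldsymbol\lambda_v(t_0)=\mathbf 0$, $\lambda_y(t_f)=\nu_0$; and the Hamiltonian minimization condition ($\boldsymbol u(t)$ minimizes $H$ over $\mathbb{R}^{N_x}$). An extremal is abnormal if $\nu_0=0$. *)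

theory Defs
  imports "HOL-Analysis.Analysis"
begin

text \<open>Problem (R).  The state space R^{N_x} is rendered as real^'n.
  gE is the gradient of E, hE its Hessian (as a matrix).\<close>

definition hamiltonian ::
  "(real^'n \<Rightarrow> real^'n) \<Rightarrow> real^'n \<Rightarrow> real^'n \<Rightarrow> real
    \<Rightarrow> real^'n \<Rightarrow> real^'n \<Rightarrow> real \<Rightarrow> real^'n \<Rightarrow> real" where
  "hamiltonian gE lx lv ly x v y u = lx \<bullet> v + lv \<bullet> u + ly * (gE x \<bullet> v)"

definition admissible_R ::
  "(real^'n \<Rightarrow> real) \<Rightarrow> (real^'n \<Rightarrow> real^'n) \<Rightarrow> real^'n \<Rightarrow> real \<Rightarrow> real
    \<Rightarrow> (real \<Rightarrow> real^'n) \<Rightarrow> (real \<Rightarrow> real^'n) \<Rightarrow> (real \<Rightarrow> real)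
    \<Rightarrow> (real \<Rightarrow> real^'n) \<Rightarrow> bool" where
  "admissible_R E gE x0 t0 tf x v y u \<longleftrightarrow>
     t0 \<le> tf \<and>
     (\<forall>t\<in>{t0..tf}. (x has_vector_derivative v t) (at t within {t0..tf})) \<and>
     (\<forall>t\<in>{t0..tf}. (v has_vector_derivative u t) (at t within {t0..tf})) \<and>
     (\<forall>t\<in>{t0..tf}. (y has_vector_derivative (gE (x t) \<bullet> v t)) (at t within {t0..tf})) \<and>
     x t0 = x0 \<and> y t0 = E x0 \<and> v tf = 0"

definition extremal_R ::
  "(real^'n \<Rightarrow> real) \<Rightarrow> (real^'n \<Rightarrow> real^'n) \<Rightarrow> (real^'n \<Rightarrow> real^'n^'n)
    \<Rightarrow> real^'n \<Rightarrow> real \<Rightarrow> real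
    \<Rightarrow> (real \<Rightarrow> real^'n) \<Rightarrow> (real \<Rightarrow> real^'n) \<Rightarrow> (real \<Rightarrow> real)
    \<Rightarrow> (real \<Rightarrow> real^'n)
    \<Rightarrow> (real \<Rightarrow> real^'n) \<Rightarrow> (real \<Rightarrow> real^'n) \<Rightarrow> (real \<Rightarrow> real) \<Rightarrow> real \<Rightarrow> bool" where
  "extremal_R E gE hE x0 t0 tf x v y u lx lv ly nu0 \<longleftrightarrow>
     admissible_R E gE x0 t0 tf x v y u \<and>
     nu0 \<ge> 0 \<and>
     \<not> (nu0 = 0 \<and> (\<forall>t\<in>{t0..tf}. lx t = 0 \<and> lv t = 0 \<and> ly t = 0)) \<and>
     (\<forall>t\<in>{t0..tf}. (lx has_vector_derivative (- (ly t *\<^sub>R (hE (x t) *v v t))))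
                       (at t within {t0..tf})) \<and>
     (\<forall>t\<in>{t0..tf}. (lv has_vector_derivative (- lx t - ly t *\<^sub>R gE (x t)))
                       (at t within {t0..tf})) \<and>
     (\<forall>t\<in>{t0..tf}. (ly has_vector_derivative 0) (at t within {t0..tf})) \<and>
     lx tf = 0 \<and> lv t0 = 0 \<and> ly tf = nu0 \<and>
     (\<forall>t\<in>{t0..tf}. \<forall>w.
        hamiltonian gE (lx t) (lv t) (ly t) (x t) (v t) (y t) (u t)
          \<le> hamiltonian gE (lx t) (lv t) (ly t) (x t) (v t) (y t) w)"

end

theory Submission
  imports Defs
begin

theorem lemma1:
  fixes E :: "real^'n \<Rightarrow> real"
    and gE :: "real^'n \<Rightarrow> real^'n"
    and hE :: "real^'n \<Rightarrow> real^'n^'n"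
  assumes grad: "\<And>z. (E has_derivative (\<lambda>h. gE z \<bullet> h)) (at z)"
    and hess: "\<And>z. (gE has_derivative (\<lambda>h. hE z *v h)) (at z)"
    and ext: "extremal_R E gE hE x0 t0 tf x v y u lx lv ly nu0"
  shows "nu0 > 0"
proof (rule ccontr)
  assume "\<not> nu0 > 0"
  with ext have n0: "nu0 = 0" unfolding extremal_R_def by auto
  have le: "t0 \<le> tf" using ext unfolding extremal_R_def admissible_R_def by auto
  have lv0: "lv t = 0" if t: "t \<in> {t0..tf}" for t
  proof -
    have "hamiltonian gE (lx t) (lv t) (ly t) (x t) (v t) (y t) (u t)
          \<le> hamiltonian gE (lx t) (lv t) (ly t) (x t) (v t) (y t) (u t - lv t)"
      using ext t unfolding extremal_R_def by blast
    hence "lv t \<bullet> u t \<le> lv t \<bullet> (u t - lv t)" by (simp add: hamiltonian_def)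
    hence "lv t \<bullet> lv t \<le> 0" by (simp add: inner_diff_right)
    thus ?thesis by (metis inner_eq_zero_iff inner_ge_zero order_antisym)
  qed
  have "\<exists>c. \<forall>t\<in>{t0..tf}. ly t = c"
  proof (rule has_field_derivative_zero_constant)
    show "convex {t0..tf}" by simp
    fix t assume "t \<in> {t0..tf}"
    hence "(ly has_vector_derivative 0) (at t within {t0..tf})"
      using ext unfolding extremal_R_def by blast
    thus "(ly has_field_derivative 0) (at t within {t0..tf})"
      by (simp add: has_real_derivative_iff_has_vector_derivative)
  qed
  then obtain c where c: "\<forall>t\<in>{t0..tf}. ly t = c" by blast
  have "ly tf = 0" using ext n0 unfolding extremal_R_def by auto
  with c le have ly0: "\<forall>t\<in>{t0..tf}. ly t = 0" by auto
  have lx0: "lx t = 0" if t: "t \<in> {t0..tf}" for t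
  proof (cases "t0 < tf")
    case True
    have d1: "(lv has_vector_derivative (- lx t - ly t *\<^sub>R gE (x t))) (at t within {t0..tf})"
      using ext t unfolding extremal_R_def by blast
    have d2: "(lv has_vector_derivative 0) (at t within {t0..tf})"
    proof -
      have "((\<lambda>_. 0::real^'n) has_vector_derivative 0) (at t within {t0..tf})" by simp
      thus ?thesis
        using has_vector_derivative_transform[of t "{t0..tf}" lv "\<lambda>_. 0" 0] t lv0 by auto
    qed
    have "- lx t - ly t *\<^sub>R gE (x t) = 0"
      using vector_derivative_unique_within_closed_interval[of t0 tf t lv] True t d1 d2
      by (metis atLeastAtMost_iff cbox_interval)
    thus ?thesis using ly0 t by simp
  next
    case False
    with le t have "t = tf" by auto
    thus ?thesis using ext unfolding extremal_R_def by auto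
  qed
  show False using ext n0 lx0 lv0 ly0 unfolding extremal_R_def by blast
qed

end
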